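(* Let $u^1,\dots,u^M$ be coherent utilities on $L^0$ with determining sets $\mathcal{D}^1,\dots,\mathcal{D}^M$, and $\rho^m=-u^m$. Let $X=(X^1,\dots,X^d)$ with $X^i\in\bigcap_mL^1_w(\mathcal{D}^m)$, and assume $u^m(\langle h,X\rangle)<0$ for all $h\in\mathbb{R}^d\setminus\{0\}$ and all $m$. Let $E\in\mathbb{R}^d\setminus\{0\}$ and $c^1,\dots,c^M\in(0,\infty)$. Set $G^m=\mathrm{cl}\{\mathsf{E}_\mathsf{Q}X:\mathsf{Q}\in\mathcal{D}^m\}\subseteq\mathbb{R}^d$ and $G=\mathrm{conv}\{G^m/c^m:m=1,\dots,M\}$ (a convex compact set containing $0$ in its interior). Let $T$ be the point of the boundary of $G$ on the ray $\{-tE:t>0\}$, and let $N$ be the set of inner normals to $G$ at $T$, i.e. $N=\{h\in\mathbb{R}^d:\langle h,x\rangle\ge\langle h,T\rangle\ \forall x\in G\}$. Then the set of solutions of the problem $$\langle h,E\rangle\to\max\quad\text{over }h\in\mathbb{R}^d\text{ subject to }\rho^m(\langle h,X\rangle)\le c^m,\ m=1,\dots,M,$$ is $\{h\in N:\langle h,T\rangle=-1\}$, and the maximal value of $\langle h,E\rangle$ is $|E|/|T|$.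
   Context: Let $(\Omega,\mathcal{F},\mathsf{P})$ be a probability space, $L^0$ the space of all real random variables, and $\mathcal{P}$ the set of probability measures on $\mathcal{F}$ absolutely continuous with respect to $\mathsf{P}$. For $\mathsf{Q}\in\mathcal{P}$ and $X\in L^0$, $\mathsf{E}_\mathsf{Q}X:=\mathsf{E}_\mathsf{Q}X^+-\mathsf{E}_\mathsf{Q}X^-$ with the convention $\infty-\infty=-\infty$ (for a vector $X$, $\mathsf{E}_\mathsf{Q}X$ is taken componentwise). A coherent utility on $L^0$ is a map $u:L^0\to[-\infty,\infty]$ of the form $u(X)=\inf_{\mathsf{Q}\in\mathcal{D}}\mathsf{E}_\mathsf{Q}X$ for a nonempty $\mathcal{D}\subseteq\mathcal{P}$; its determining set is the largest such set, $\{\mathsf{Q}\in\mathcal{P}:\mathsf{E}_\mathsf{Q}X\ge u(X)\ \forall X\in L^0\}$. For a coherent utility $u$ with determining set $\mathcal{D}$, $L^1_w(\mathcal{D})=\{X\in L^0:u(X)>-\infty,\ u(-X)>-\infty\}$. $\mathrm{cl}$ denotes closure and $\mathrm{conv}$ convex hull. *)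

theory Defs
  imports "HOL-Probability.Probability"
begin

definition Pset :: "'a measure \<Rightarrow> 'a measure set" where
  "Pset P = {Q. sets Q = sets P \<and> prob_space Q \<and> absolutely_continuous P Q}"

text \<open>Expectation E_Q X = E_Q X^+ - E_Q X^- with the convention infinity - infinity = -infinity.\<close>
definition EQ :: "'a measure \<Rightarrow> ('a \<Rightarrow> real) \<Rightarrow> ereal" where
  "EQ Q X = (let p = enn2ereal (\<integral>\<^sup>+ \<omega>. ennreal (max (X \<omega>) 0) \<partial>Q);
                 n = enn2ereal (\<integral>\<^sup>+ \<omega>. ennreal (max (- X \<omega>) 0) \<partial>Q)
             in if n = \<infinity> then - \<infinity> else p - n)"

definition EQvec :: "'a measure \<Rightarrow> ('a \<Rightarrow> real ^ 'd) \<Rightarrow> real ^ 'd" where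
  "EQvec Q X = (\<chi> i. real_of_ereal (EQ Q (\<lambda>\<omega>. X \<omega> $ i)))"

definition coherent_utility :: "'a measure \<Rightarrow> (('a \<Rightarrow> real) \<Rightarrow> ereal) \<Rightarrow> bool" where
  "coherent_utility P u \<longleftrightarrow>
     (\<exists>D. D \<noteq> {} \<and> D \<subseteq> Pset P \<and>
        (\<forall>X \<in> borel_measurable P. u X = (INF Q\<in>D. EQ Q X)))"

definition detset :: "'a measure \<Rightarrow> (('a \<Rightarrow> real) \<Rightarrow> ereal) \<Rightarrow> 'a measure set" where
  "detset P u = {Q \<in> Pset P. \<forall>X \<in> borel_measurable P. EQ Q X \<ge> u X}"

definition L1w :: "'a measure \<Rightarrow> 'a measure set \<Rightarrow> ('a \<Rightarrow> real) set" where
  "L1w P D = {X \<in> borel_measurable P.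
      (INF Q\<in>D. EQ Q X) > - \<infinity> \<and> (INF Q\<in>D. EQ Q (\<lambda>\<omega>. - X \<omega>)) > - \<infinity>}"

end

theory Submission
  imports Defs
begin


lemma max0_ennreal: "ennreal (max (r::real) 0) = ennreal r"
  by (simp add: max_def ennreal_neg)

lemma EQ_alt: "EQ Q Y = (let p = enn2ereal (\<integral>\<^sup>+ \<omega>. ennreal (Y \<omega>) \<partial>Q);
                 n = enn2ereal (\<integral>\<^sup>+ \<omega>. ennreal (- Y \<omega>) \<partial>Q)
             in if n = \<infinity> then - \<infinity> else p - n)"
  unfolding EQ_def max0_ennreal by simp

lemma enn2ereal_fin: "x \<noteq> top \<Longrightarrow> enn2ereal x = ereal (enn2real x)"
proof -
  assume "x \<noteq> top"
  then have "x < top" by (simp add: less_top)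
  then have "enn2ereal x = enn2ereal (ennreal (enn2real x))" by simp
  also have "\<dots> = ereal (enn2real x)" by (simp add: enn2ereal_ennreal)
  finally show ?thesis .
qed

lemma EQ_integrable:
  assumes "integrable Q Y"
  shows "EQ Q Y = ereal (integral\<^sup>L Q Y)"
proof -
  have p: "(\<integral>\<^sup>+ x. ennreal (Y x) \<partial>Q) \<noteq> \<infinity>" and n: "(\<integral>\<^sup>+ x. ennreal (- Y x) \<partial>Q) \<noteq> \<infinity>"
    using assms unfolding real_integrable_def by auto
  show ?thesis unfolding EQ_alt Let_def real_lebesgue_integral_def[OF assms]
    using p n by (simp add: enn2ereal_fin)
qed

lemma EQ_finite_integrable:
  assumes "Y \<in> borel_measurable Q" "EQ Q Y > - \<infinity>" "EQ Q (\<lambda>\<omega>. - Y \<omega>) > - \<infinity>"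
  shows "integrable Q Y"
proof -
  have "(\<integral>\<^sup>+ x. ennreal (- Y x) \<partial>Q) \<noteq> \<infinity>"
  proof
    assume "(\<integral>\<^sup>+ x. ennreal (- Y x) \<partial>Q) = \<infinity>"
    then have "EQ Q Y = - \<infinity>" unfolding EQ_alt Let_def by simp
    then show False using assms(2) by simp
  qed
  moreover have "(\<integral>\<^sup>+ x. ennreal (Y x) \<partial>Q) \<noteq> \<infinity>"
  proof
    assume "(\<integral>\<^sup>+ x. ennreal (Y x) \<partial>Q) = \<infinity>"
    then have "EQ Q (\<lambda>\<omega>. - Y \<omega>) = - \<infinity>" unfolding EQ_alt Let_def by simp
    then show False using assms(3) by simp
  qed
  ultimately show ?thesis using assms(1) unfolding real_integrable_def by auto
qed

lemma support_frontier:
  fixes S :: "'a::euclidean_space set"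
  assumes "convex S" "x \<in> frontier S"
  obtains a where "a \<noteq> 0" "\<forall>y\<in>S. a \<bullet> x \<le> a \<bullet> y"
proof (cases "x \<in> rel_interior S")
  case False
  have xc: "x \<in> closure S" using assms(2) unfolding frontier_def by blast
  have "\<exists>a. a \<noteq> 0 \<and> (\<forall>y\<in>closure S. a \<bullet> x \<le> a \<bullet> y)"
    by (rule supporting_hyperplane_relative_frontier[OF assms(1) xc False]) auto
  then obtain a where a0: "a \<noteq> 0" and a1: "\<forall>y\<in>closure S. a \<bullet> x \<le> a \<bullet> y" by blast
  have a: "a \<noteq> 0" "\<And>y. y \<in> closure S \<Longrightarrow> a \<bullet> x \<le> a \<bullet> y" using a0 a1 by auto
  have "\<forall>y\<in>S. a \<bullet> x \<le> a \<bullet> y"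
  proof
    fix y assume "y \<in> S"
    then have "y \<in> closure S" by (rule closure_subset[THEN subsetD])
    then show "a \<bullet> x \<le> a \<bullet> y" by (rule a(2))
  qed
  then show ?thesis using a(1) by (rule that[rotated])
next
  case True
  have ni: "x \<notin> interior S" using assms(2) unfolding frontier_def by blast
  have "affine hull S \<noteq> UNIV"
  proof
    assume "affine hull S = UNIV"
    then have "rel_interior S = interior S" by (rule rel_interior_interior)
    with True ni show False by simp
  qed
  then have "aff_dim S < DIM('a)" by (simp add: aff_dim_lt_full)
  then obtain a b where ab: "a\<noteq>0" "S \<subseteq> {x. a\<bullet>x=b}" by (rule aff_lowdim_subset_hyperplane)
  have xS: "x \<in> S" using True rel_interior_subset by blast
  have "\<forall>y\<in>S. a \<bullet> x \<le> a \<bullet> y"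
  proof
    fix y assume "y \<in> S"
    then have "a \<bullet> y = b" using ab(2) by blast
    moreover have "a \<bullet> x = b" using xS ab(2) by blast
    ultimately show "a \<bullet> x \<le> a \<bullet> y" by simp
  qed
  then show ?thesis using ab(1) by (rule that[rotated])
qed

lemma inner_meas:
  fixes X :: "'a \<Rightarrow> real ^ 'd"
  assumes "\<And>i. (\<lambda>\<omega>. X \<omega> $ i) \<in> borel_measurable M"
  shows "(\<lambda>\<omega>. h \<bullet> X \<omega>) \<in> borel_measurable M"
  unfolding inner_vec_def using assms by (intro borel_measurable_sum) simp

lemma inner_integrable:
  fixes X :: "'a \<Rightarrow> real ^ 'd"
  assumes "\<And>i. integrable M (\<lambda>\<omega>. X \<omega> $ i)"
  shows "integrable M (\<lambda>\<omega>. h \<bullet> X \<omega>)"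
    and "integral\<^sup>L M (\<lambda>\<omega>. h \<bullet> X \<omega>) = (\<Sum>i\<in>UNIV. h $ i * integral\<^sup>L M (\<lambda>\<omega>. X \<omega> $ i))"
  unfolding inner_vec_def using assms by (auto intro!: integrable_sum simp: integral_sum)





theorem theorem4p1:
  fixes P :: "'a measure"
    and K :: nat
    and u :: "nat \<Rightarrow> ('a \<Rightarrow> real) \<Rightarrow> ereal"
    and D :: "nat \<Rightarrow> 'a measure set"
    and X :: "'a \<Rightarrow> real ^ 'd"
    and E :: "real ^ 'd"
    and c :: "nat \<Rightarrow> real"
    and T :: "real ^ 'd"
  assumes P: "prob_space P"
    and K: "K \<ge> 1"
    and coh: "\<And>m. m < K \<Longrightarrow> coherent_utility P (u m)"
    and D: "\<And>m. m < K \<Longrightarrow> D m = detset P (u m)"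
    and XL1: "\<And>i m. m < K \<Longrightarrow> (\<lambda>\<omega>. X \<omega> $ i) \<in> L1w P (D m)"
    and neg: "\<And>h m. m < K \<Longrightarrow> h \<noteq> 0 \<Longrightarrow> u m (\<lambda>\<omega>. h \<bullet> X \<omega>) < 0"
    and E: "E \<noteq> 0"
    and c: "\<And>m. m < K \<Longrightarrow> c m > 0"
    and T: "T \<in> frontier
              (convex hull (\<Union>m<K. (\<lambda>x. x /\<^sub>R c m) ` closure ((\<lambda>Q. EQvec Q X) ` D m)))"
    and Tray: "\<exists>t>0. T = - (t *\<^sub>R E)"
  shows
    "(let G = convex hull (\<Union>m<K. (\<lambda>x. x /\<^sub>R c m) ` closure ((\<lambda>Q. EQvec Q X) ` D m));
          N = {h. \<forall>x\<in>G. h \<bullet> x \<ge> h \<bullet> T};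
          feas = {h :: real ^ 'd. \<forall>m<K. - u m (\<lambda>\<omega>. h \<bullet> X \<omega>) \<le> ereal (c m)}
      in {h \<in> feas. \<forall>h'\<in>feas. h' \<bullet> E \<le> h \<bullet> E} = {h \<in> N. h \<bullet> T = -1}
         \<and> (\<exists>h\<in>feas. h \<bullet> E = norm E / norm T)
         \<and> (\<forall>h\<in>feas. h \<bullet> E \<le> norm E / norm T))"
  
proof -
  define G where "G = convex hull (\<Union>m<K. (\<lambda>x. x /\<^sub>R c m) ` closure ((\<lambda>Q. EQvec Q X) ` D m))"
  define N where "N = {h. \<forall>x\<in>G. h \<bullet> x \<ge> h \<bullet> T}"
  define feas where "feas = {h :: real ^ 'd. \<forall>m<K. - u m (\<lambda>\<omega>. h \<bullet> X \<omega>) \<le> ereal (c m)}"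
  have K0: "0 < K" using K by simp
  have uinf: "u m Y = (INF Q\<in>D m. EQ Q Y)" if m: "m < K" and Y: "Y \<in> borel_measurable P" for m Y
  proof -
    obtain D' where D': "D' \<noteq> {}" "D' \<subseteq> Pset P"
      "\<forall>X \<in> borel_measurable P. u m X = (INF Q\<in>D'. EQ Q X)"
      using coh[OF m] unfolding coherent_utility_def by blast
    have "D' \<subseteq> D m"
    proof
      fix Q assume Q: "Q \<in> D'"
      have "\<forall>Z \<in> (borel_measurable P :: ('a \<Rightarrow> real) set). EQ Q Z \<ge> u m Z"
      proof
        fix Z :: "'a \<Rightarrow> real" assume "Z \<in> borel_measurable P"
        then have "u m Z = (INF Q\<in>D'. EQ Q Z)" using D'(3) by blast
        also have "\<dots> \<le> EQ Q Z" using Q by (rule INF_lower)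
        finally show "EQ Q Z \<ge> u m Z" .
      qed
      then show "Q \<in> D m" unfolding D[OF m] detset_def using Q D'(2) by blast
    qed
    then have "(INF Q\<in>D m. EQ Q Y) \<le> (INF Q\<in>D'. EQ Q Y)" by (rule INF_superset_mono) auto
    also have "\<dots> = u m Y" using D' Y by auto
    finally have 1: "(INF Q\<in>D m. EQ Q Y) \<le> u m Y" .
    have "u m Y \<le> (INF Q\<in>D m. EQ Q Y)"
      by (rule INF_greatest) (use Y in \<open>auto simp: D[OF m] detset_def\<close>)
    with 1 show ?thesis by (rule antisym[rotated])
  qed
  have Xmeas: "(\<lambda>\<omega>. X \<omega> $ i) \<in> borel_measurable P" for i
    using XL1[OF K0, of i] unfolding L1w_def by auto
  have hXmeas: "(\<lambda>\<omega>. h \<bullet> X \<omega>) \<in> borel_measurable P" for h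
    by (rule inner_meas) (rule Xmeas)
  have EQlin: "EQ Q (\<lambda>\<omega>. h \<bullet> X \<omega>) = ereal (h \<bullet> EQvec Q X)" if m: "m < K" and Q: "Q \<in> D m" for m Q h
  proof -
    have QP: "Q \<in> Pset P" using Q unfolding D[OF m] detset_def by auto
    then have sQ: "sets Q = sets P" unfolding Pset_def by auto
    have int: "integrable Q (\<lambda>\<omega>. X \<omega> $ i)" for i
    proof (rule EQ_finite_integrable)
      show "(\<lambda>\<omega>. X \<omega> $ i) \<in> borel_measurable Q"
        using Xmeas[of i] by (simp add: measurable_cong_sets[OF sQ refl])
      have L: "(INF Q\<in>D m. EQ Q (\<lambda>\<omega>. X \<omega> $ i)) > - \<infinity>" "(INF Q\<in>D m. EQ Q (\<lambda>\<omega>. - X \<omega> $ i)) > - \<infinity>"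
        using XL1[OF m, of i] unfolding L1w_def by auto
      have "(INF Q\<in>D m. EQ Q (\<lambda>\<omega>. X \<omega> $ i)) \<le> EQ Q (\<lambda>\<omega>. X \<omega> $ i)" using Q by (rule INF_lower)
      then show "EQ Q (\<lambda>\<omega>. X \<omega> $ i) > - \<infinity>" using L(1) by order
      have "(INF Q\<in>D m. EQ Q (\<lambda>\<omega>. - X \<omega> $ i)) \<le> EQ Q (\<lambda>\<omega>. - X \<omega> $ i)" using Q by (rule INF_lower)
      then show "EQ Q (\<lambda>\<omega>. - X \<omega> $ i) > - \<infinity>" using L(2) by order
    qed
    have comp: "EQvec Q X $ i = integral\<^sup>L Q (\<lambda>\<omega>. X \<omega> $ i)" for i
      unfolding EQvec_def using EQ_integrable[OF int[of i]] by simp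
    have "EQ Q (\<lambda>\<omega>. h \<bullet> X \<omega>) = ereal (integral\<^sup>L Q (\<lambda>\<omega>. h \<bullet> X \<omega>))"
      by (rule EQ_integrable) (rule inner_integrable(1)[OF int])
    also have "integral\<^sup>L Q (\<lambda>\<omega>. h \<bullet> X \<omega>) = h \<bullet> EQvec Q X"
      unfolding inner_integrable(2)[OF int] by (simp add: inner_vec_def comp)
    finally show ?thesis .
  qed
  have feas_iff: "h \<in> feas \<longleftrightarrow> (\<forall>m<K. \<forall>Q\<in>D m. - c m \<le> h \<bullet> EQvec Q X)" for h
  proof -
    have "(- u m (\<lambda>\<omega>. h \<bullet> X \<omega>) \<le> ereal (c m)) \<longleftrightarrow> (\<forall>Q\<in>D m. - c m \<le> h \<bullet> EQvec Q X)"
      if m: "m < K" for m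
    proof -
      have "(- u m (\<lambda>\<omega>. h \<bullet> X \<omega>) \<le> ereal (c m)) \<longleftrightarrow> - ereal (c m) \<le> u m (\<lambda>\<omega>. h \<bullet> X \<omega>)"
        by (rule ereal_uminus_le_reorder)
      also have "\<dots> \<longleftrightarrow> (\<forall>Q\<in>D m. - ereal (c m) \<le> EQ Q (\<lambda>\<omega>. h \<bullet> X \<omega>))"
        unfolding uinf[OF m hXmeas] by (rule le_INF_iff)
      also have "\<dots> \<longleftrightarrow> (\<forall>Q\<in>D m. - c m \<le> h \<bullet> EQvec Q X)"
        using EQlin[OF m] by simp
      finally show ?thesis .
    qed
    then show ?thesis unfolding feas_def by auto
  qed
  have memG: "EQvec Q X /\<^sub>R c m \<in> (\<Union>m<K. (\<lambda>x. x /\<^sub>R c m) ` closure ((\<lambda>Q. EQvec Q X) ` D m))"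
    if m: "m < K" and Q: "Q \<in> D m" for m Q
  proof -
    have "EQvec Q X \<in> closure ((\<lambda>Q. EQvec Q X) ` D m)"
      by (rule closure_subset[THEN subsetD]) (rule imageI[OF Q])
    then have "EQvec Q X /\<^sub>R c m \<in> (\<lambda>x. x /\<^sub>R c m) ` closure ((\<lambda>Q. EQvec Q X) ` D m)"
      by (rule imageI)
    then show ?thesis using m by (intro UN_I[of m]) auto
  qed
  have feas_G: "h \<in> feas \<longleftrightarrow> (\<forall>y\<in>G. -1 \<le> h \<bullet> y)" for h
  proof
    assume hf: "h \<in> feas"
    have "G \<subseteq> {y. -1 \<le> h \<bullet> y}" unfolding G_def
    proof (rule hull_minimal)
      show "convex {y. -1 \<le> h \<bullet> y}" by (rule convex_halfspace_ge)
      show "(\<Union>m<K. (\<lambda>x. x /\<^sub>R c m) ` closure ((\<lambda>Q. EQvec Q X) ` D m)) \<subseteq> {y. -1 \<le> h \<bullet> y}"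
      proof clarify
        fix m x assume m: "m < K" and x: "x \<in> closure ((\<lambda>Q. EQvec Q X) ` D m)"
        have "closure ((\<lambda>Q. EQvec Q X) ` D m) \<subseteq> {y. - c m \<le> h \<bullet> y}"
          by (rule closure_minimal) (use hf feas_iff m in \<open>auto intro: closed_halfspace_ge\<close>)
        with x have "- c m \<le> h \<bullet> x" by auto
        then show "-1 \<le> h \<bullet> (x /\<^sub>R c m)" using c[OF m] by (simp add: field_simps)
      qed
    qed
    then show "\<forall>y\<in>G. -1 \<le> h \<bullet> y" by auto
  next
    assume hG: "\<forall>y\<in>G. -1 \<le> h \<bullet> y"
    have "- c m \<le> h \<bullet> EQvec Q X" if m: "m < K" and Q: "Q \<in> D m" for m Q
    proof -
      have "EQvec Q X /\<^sub>R c m \<in> G" unfolding G_def by (rule hull_inc, rule memG[OF m Q])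
      with hG have "-1 \<le> h \<bullet> (EQvec Q X /\<^sub>R c m)" by auto
      then show ?thesis using c[OF m] by (simp add: field_simps)
    qed
    then show "h \<in> feas" using feas_iff by auto
  qed
  have negG: "\<exists>y\<in>G. h \<bullet> y < 0" if h: "h \<noteq> 0" for h
  proof -
    have "(INF Q\<in>D 0. EQ Q (\<lambda>\<omega>. h \<bullet> X \<omega>)) < 0" using neg[OF K0 h] uinf[OF K0 hXmeas] by simp
    then obtain Q where Q: "Q \<in> D 0" "EQ Q (\<lambda>\<omega>. h \<bullet> X \<omega>) < 0" by (auto simp: INF_less_iff)
    then have lt: "h \<bullet> EQvec Q X < 0" using EQlin[OF K0 Q(1)] by simp
    have "EQvec Q X /\<^sub>R c 0 \<in> G" unfolding G_def by (rule hull_inc, rule memG[OF K0 Q(1)])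
    moreover have "h \<bullet> (EQvec Q X /\<^sub>R c 0) < 0" using lt c[OF K0] by (simp add: mult_pos_neg)
    ultimately show ?thesis by blast
  qed
  obtain t where t: "t > 0" "T = - (t *\<^sub>R E)" using Tray by blast
  have TG: "T \<in> frontier G" using T unfolding G_def .
  have TcG: "T \<in> closure G" using TG frontier_def by auto
  have nT: "norm E / norm T = 1 / t"
  proof -
    have "norm T = t * norm E" using t by simp
    then show ?thesis using t E by simp
  qed
  have hT: "h \<bullet> T = - t * (h \<bullet> E)" for h using t by simp
  have upper: "h \<bullet> E \<le> 1 / t" if hf: "h \<in> feas" for h
  proof -
    have "closure G \<subseteq> {y. -1 \<le> h \<bullet> y}"
      by (rule closure_minimal) (use hf feas_G in \<open>auto intro: closed_halfspace_ge\<close>)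
    with TcG have "-1 \<le> h \<bullet> T" by auto
    then have "t * (h \<bullet> E) \<le> 1" using hT by simp
    then show ?thesis using t by (simp add: field_simps)
  qed
  obtain a where a: "a \<noteq> 0" "\<forall>y\<in>G. a \<bullet> T \<le> a \<bullet> y"
  proof -
    have "convex G" unfolding G_def by (rule convex_convex_hull)
    from support_frontier[OF this TG] show ?thesis using that by blast
  qed
  have aT: "a \<bullet> T < 0" using negG[OF a(1)] a(2) by force
  define h0 where "h0 = a /\<^sub>R (- (a \<bullet> T))"
  have h0T: "h0 \<bullet> T = -1" unfolding h0_def using aT by simp
  have h0G: "\<forall>y\<in>G. -1 \<le> h0 \<bullet> y"
  proof
    fix y assume "y \<in> G"
    then have "a \<bullet> T \<le> a \<bullet> y" using a by auto
    then show "-1 \<le> h0 \<bullet> y" unfolding h0_def using aT by (simp add: field_simps)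
  qed
  have h0f: "h0 \<in> feas" using feas_G h0G by auto
  have h0E: "h0 \<bullet> E = 1 / t" using h0T hT[of h0] t by (simp add: field_simps)
  have S: "{h \<in> feas. \<forall>h'\<in>feas. h' \<bullet> E \<le> h \<bullet> E} = {h \<in> N. h \<bullet> T = -1}"
  proof (intro equalityI subsetI)
    fix h assume "h \<in> {h \<in> feas. \<forall>h'\<in>feas. h' \<bullet> E \<le> h \<bullet> E}"
    then have hf: "h \<in> feas" and hm: "h0 \<bullet> E \<le> h \<bullet> E" using h0f by auto
    have "h \<bullet> E = 1 / t" using upper[OF hf] hm h0E by simp
    then have hT1: "h \<bullet> T = -1" using hT[of h] t by simp
    then show "h \<in> {h \<in> N. h \<bullet> T = -1}" using hf feas_G unfolding N_def by auto
  next
    fix h assume "h \<in> {h \<in> N. h \<bullet> T = -1}"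
    then have hN: "\<forall>x\<in>G. h \<bullet> x \<ge> -1" and hT1: "h \<bullet> T = -1" unfolding N_def by auto
    then have hf: "h \<in> feas" using feas_G by auto
    have "h \<bullet> E = 1 / t" using hT1 hT[of h] t by (simp add: field_simps)
    then show "h \<in> {h \<in> feas. \<forall>h'\<in>feas. h' \<bullet> E \<le> h \<bullet> E}" using hf upper by auto
  qed
  have main: "{h \<in> feas. \<forall>h'\<in>feas. h' \<bullet> E \<le> h \<bullet> E} = {h \<in> N. h \<bullet> T = -1}
         \<and> (\<exists>h\<in>feas. h \<bullet> E = norm E / norm T)
         \<and> (\<forall>h\<in>feas. h \<bullet> E \<le> norm E / norm T)"
  proof (intro conjI)
    show "{h \<in> feas. \<forall>h'\<in>feas. h' \<bullet> E \<le> h \<bullet> E} = {h \<in> N. h \<bullet> T = -1}" by (rule S)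
    show "\<exists>h\<in>feas. h \<bullet> E = norm E / norm T" using h0f h0E nT by metis
    show "\<forall>h\<in>feas. h \<bullet> E \<le> norm E / norm T" using upper nT by simp
  qed
  then show ?thesis unfolding Let_def G_def[symmetric] N_def[symmetric] feas_def[symmetric] .
qed

end
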